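(* Consider the two-player Tower of Hanoi game under normal play on $l\ge4$ pegs. If $n=2$, the game is a draw for the ending conditions (EC1), (EC2), (EC3), and the first player (Anh) wins for (EC4) and (EC5). If $n=1$, the first player wins (in her first move) for (EC1), (EC4), (EC5).
   Context: Tower of Hanoi on $l$ pegs (labeled $1,\dots,l$) with $n$ disks of pairwise distinct sizes: a position assigns each disk to a peg, disks on each peg stacked with sizes decreasing from bottom to top. A legal move transfers the top disk of one peg to a different peg that is empty or has a larger top disk. A tower position is one with all disks on one peg. Two-player game: Anh (first player) and Bao (second player) alternate moves starting from the position with all disks on Peg 1; a player may not move the disk that the opponent moved in the immediately preceding move. The game ends when the tower has been transferred to a final peg, according to one fixed ending condition: (EC1) all disks on a given peg distinct from Peg 1; (EC2) all disks on Peg 1, the largest disk having been moved at least once; (EC3) all disks on Peg 1, the smallest disk having been moved at least once; (EC4) all disks on any peg, the largest disk having been moved at least once; (EC5) all disks on any peg, the smallest disk having been moved at least once. A move creating a tower position that does not end the game (tower on a non-final peg) is not allowed. Normal play: the player who makes the last (game-ending) move wins; if neither player can force a win, the game is a draw. *)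

theory Defs
  imports Main
begin

text \<open>Disks are 0,...,n-1 (disk 0 smallest, disk n-1 largest); pegs are 1,...,l.
  A configuration c maps each disk to its peg (values at d >= n are irrelevant).
  A game state records the configuration, the disk moved in the preceding move,
  and whether the largest / smallest disk has been moved at least once.\<close>

datatype ending_condition = EC1 nat | EC2 | EC3 | EC4 | EC5

type_synonym hstate = "(nat \<Rightarrow> nat) \<times> nat option \<times> bool \<times> bool"

definition legal_move :: "nat \<Rightarrow> nat \<Rightarrow> (nat \<Rightarrow> nat) \<Rightarrow> nat \<Rightarrow> nat \<Rightarrow> bool" where
  "legal_move n l c d q \<longleftrightarrow>
     d < n \<and> q \<in> {1..l} \<and> q \<noteq> c d \<and>
     (\<forall>e<d. c e \<noteq> c d) \<and> (\<forall>e<d. c e \<noteq> q)"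

definition is_tower :: "nat \<Rightarrow> (nat \<Rightarrow> nat) \<Rightarrow> bool" where
  "is_tower n c \<longleftrightarrow> (\<exists>p. \<forall>d<n. c d = p)"

definition do_move :: "nat \<Rightarrow> hstate \<Rightarrow> nat \<Rightarrow> nat \<Rightarrow> hstate" where
  "do_move n s d q = (case s of (c, lst, bm, sm) \<Rightarrow>
      (c(d := q), Some d, bm \<or> d = n - 1, sm \<or> d = 0))"

definition game_ends :: "ending_condition \<Rightarrow> nat \<Rightarrow> hstate \<Rightarrow> bool" where
  "game_ends ec n s = (case s of (c, lst, bm, sm) \<Rightarrow>
     (case ec of
        EC1 f \<Rightarrow> (\<forall>d<n. c d = f)
      | EC2 \<Rightarrow> (\<forall>d<n. c d = 1) \<and> bm
      | EC3 \<Rightarrow> (\<forall>d<n. c d = 1) \<and> sm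
      | EC4 \<Rightarrow> is_tower n c \<and> bm
      | EC5 \<Rightarrow> is_tower n c \<and> sm))"

definition allowed :: "ending_condition \<Rightarrow> nat \<Rightarrow> nat \<Rightarrow> hstate \<Rightarrow> nat \<Rightarrow> nat \<Rightarrow> bool" where
  "allowed ec n l s d q \<longleftrightarrow>
     legal_move n l (fst s) d q \<and> fst (snd s) \<noteq> Some d \<and>
     (is_tower n (fst (do_move n s d q)) \<longrightarrow> game_ends ec n (do_move n s d q))"

inductive can_force_win :: "ending_condition \<Rightarrow> nat \<Rightarrow> nat \<Rightarrow> hstate \<Rightarrow> bool"
  for ec n l where
  "allowed ec n l s d q \<Longrightarrow>
   (game_ends ec n (do_move n s d q) \<or>
    (\<forall>d' q'. allowed ec n l (do_move n s d q) d' q' \<longrightarrow>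
        \<not> game_ends ec n (do_move n (do_move n s d q) d' q') \<and>
        can_force_win ec n l (do_move n (do_move n s d q) d' q'))) \<Longrightarrow>
   can_force_win ec n l s"

definition init_state :: hstate where
  "init_state = ((\<lambda>_. 1), None, False, False)"

definition first_player_wins :: "ending_condition \<Rightarrow> nat \<Rightarrow> nat \<Rightarrow> bool" where
  "first_player_wins ec n l \<longleftrightarrow> can_force_win ec n l init_state"

definition second_player_wins :: "ending_condition \<Rightarrow> nat \<Rightarrow> nat \<Rightarrow> bool" where
  "second_player_wins ec n l \<longleftrightarrow>
     (\<forall>d q. allowed ec n l init_state d q \<longrightarrow>
        \<not> game_ends ec n (do_move n init_state d q) \<and>
        can_force_win ec n l (do_move n init_state d q))"

definition is_draw :: "ending_condition \<Rightarrow> nat \<Rightarrow> nat \<Rightarrow> bool" where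
  "is_draw ec n l \<longleftrightarrow> \<not> first_player_wins ec n l \<and> \<not> second_player_wins ec n l"

definition wins_first_move :: "ending_condition \<Rightarrow> nat \<Rightarrow> nat \<Rightarrow> bool" where
  "wins_first_move ec n l \<longleftrightarrow>
     (\<exists>d q. allowed ec n l init_state d q \<and> game_ends ec n (do_move n init_state d q))"

end

theory Submission
  imports Defs
begin

lemma tower2: "is_tower 2 c \<longleftrightarrow> c 0 = c 1"
  unfolding is_tower_def
proof
  assume "\<exists>p. \<forall>d<2. c d = p" then show "c 0 = c 1" by force
next
  assume "c 0 = c 1" then show "\<exists>p. \<forall>d<2. c d = p"
    by (intro exI[of _ "c 0"]) (auto simp: less_2_cases_iff)
qed

lemma legal2: "legal_move 2 l c d q \<longleftrightarrow>
   (d = 0 \<or> d = 1) \<and> q \<in> {1..l} \<and> q \<noteq> c d \<and> (d = 1 \<longrightarrow> c 0 \<noteq> c 1 \<and> c 0 \<noteq> q)"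
  unfolding legal_move_def
  by (auto simp: less_2_cases_iff less_Suc_eq)

lemma ends_tower: "game_ends ec n s \<Longrightarrow> is_tower n (fst s)"
  unfolding game_ends_def is_tower_def
  by (cases s; cases ec; auto)

lemma ex3: "4 \<le> (l::nat) \<Longrightarrow> \<exists>q. q \<in> {1..l} \<and> q \<noteq> a \<and> q \<noteq> b \<and> q \<noteq> c"
proof -
  assume "4 \<le> l"
  have "\<exists>q::nat. q \<ge> 1 \<and> q \<le> 4 \<and> q \<noteq> a \<and> q \<noteq> b \<and> q \<noteq> c" by presburger
  then show ?thesis using \<open>4 \<le> l\<close> by auto
qed

lemma bao_loses:
  assumes "can_force_win ec 2 l s" "l \<ge> 4"
  shows "\<not> (fst (snd s) = Some 0 \<and> fst s 0 \<noteq> fst s 1)"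
  using assms(1)
proof (induction rule: can_force_win.induct)
  case (1 s d q)
  obtain c lst bm sm where s: "s = (c,lst,bm,sm)" by (cases s)
  show ?case
  proof
    assume P: "fst (snd s) = Some 0 \<and> fst s 0 \<noteq> fst s 1"
    from 1(1) P s have d: "d = 1" and q: "q \<in> {1..l}" "q \<noteq> c 0" "q \<noteq> c 1"
      by (auto simp: allowed_def legal2)
    have s': "do_move 2 s d q = (c(1:=q), Some 1, True, sm)"
      using s d by (simp add: do_move_def)
    have ne: "\<not> game_ends ec 2 (do_move 2 s d q)"
      using s' q ends_tower[of ec 2 "do_move 2 s d q"] by (auto simp: tower2)
    obtain q' where q': "q' \<in> {1..l}" "q' \<noteq> c 0" "q' \<noteq> q" "q' \<noteq> c 1"
      using ex3[OF assms(2)] by blast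
    have al: "allowed ec 2 l (do_move 2 s d q) 0 q'"
      using q' q P s s' by (auto simp: allowed_def legal2 do_move_def tower2)
    have s'': "do_move 2 (do_move 2 s d q) 0 q' = ((c(1:=q))(0:=q'), Some 0, True, True)"
      using s' by (simp add: do_move_def)
    from 1(2) ne al have "\<not> (fst (snd (do_move 2 (do_move 2 s d q) 0 q')) = Some 0 \<and>
        fst (do_move 2 (do_move 2 s d q) 0 q') 0 \<noteq> fst (do_move 2 (do_move 2 s d q) 0 q') 1)"
      by blast
    then show False using s'' q' by simp
  qed
qed

definition Q :: "nat \<Rightarrow> hstate \<Rightarrow> bool" where
  "Q g s \<longleftrightarrow> (fst (snd s) = Some 1 \<and> fst s 1 \<noteq> g) \<or>
     (fst (snd s) = None \<and> fst s 0 = 1 \<and> fst s 1 = 1)"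

lemma anh_loses:
  assumes "can_force_win ec 2 l s" "l \<ge> 4"
    and eg: "\<And>s. game_ends ec 2 s \<Longrightarrow> fst s 0 = g \<and> fst s 1 = g"
  shows "\<not> Q g s"
  using assms(1)
proof (induction rule: can_force_win.induct)
  case (1 s d q)
  obtain c lst bm sm where s: "s = (c,lst,bm,sm)" by (cases s)
  show ?case
  proof
    assume P: "Q g s"
    from 1(1) P s have d: "d = 0" and q: "q \<in> {1..l}" "q \<noteq> c 0"
      by (auto simp: allowed_def legal2 Q_def)
    have s': "do_move 2 s d q = (c(0:=q), Some 0, bm, True)"
      using s d by (simp add: do_move_def)
    have qc1: "q \<noteq> c 1"
    proof
      assume "q = c 1"
      then have "game_ends ec 2 (do_move 2 s d q)" using 1(1) s' d
        by (simp add: allowed_def tower2)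
      then have "fst (do_move 2 s d q) 0 = g \<and> fst (do_move 2 s d q) 1 = g" by (rule eg)
      then have "q = g" "c 1 = g" using s' by auto
      then show False using P s q by (auto simp: Q_def)
    qed
    have ne: "\<not> game_ends ec 2 (do_move 2 s d q)"
      using s' qc1 ends_tower[of ec 2 "do_move 2 s d q"] by (auto simp: tower2)
    obtain q' where q': "q' \<in> {1..l}" "q' \<noteq> g" "q' \<noteq> q" "q' \<noteq> c 1"
      using ex3[OF assms(2)] by blast
    have al: "allowed ec 2 l (do_move 2 s d q) 1 q'"
      using q' q qc1 s' by (auto simp: allowed_def legal2 do_move_def tower2)
    have s'': "do_move 2 (do_move 2 s d q) 1 q' = ((c(0:=q))(1:=q'), Some 1, True, True)"
      using s' by (simp add: do_move_def)
    from 1(2) ne al have "\<not> Q g (do_move 2 (do_move 2 s d q) 1 q')"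
      by blast
    then show False using s'' q' by (simp add: Q_def)
  qed
qed

lemma no_second: "l \<ge> 4 \<Longrightarrow> \<not> second_player_wins ec 2 l"
proof
  assume l: "l \<ge> 4" and w: "second_player_wins ec 2 l"
  have al: "allowed ec 2 l init_state 0 2"
    using l by (simp add: allowed_def legal2 init_state_def do_move_def tower2)
  have "can_force_win ec 2 l (do_move 2 init_state 0 2)"
    using w al unfolding second_player_wins_def by blast
  from bao_loses[OF this l] show False by (simp add: do_move_def init_state_def)
qed

lemma no_first:
  assumes "l \<ge> 4" "\<And>s. game_ends ec 2 s \<Longrightarrow> fst s 0 = g \<and> fst s 1 = g"
  shows "\<not> first_player_wins ec 2 l"
proof
  assume "first_player_wins ec 2 l"
  then have "\<not> Q g init_state" unfolding first_player_wins_def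
    by (rule anh_loses[OF _ assms])
  then show False by (simp add: Q_def init_state_def)
qed

lemma draw:
  assumes "l \<ge> 4" "\<And>s. game_ends ec 2 s \<Longrightarrow> fst s 0 = g \<and> fst s 1 = g"
  shows "is_draw ec 2 l"
  using no_first[OF assms] no_second[OF assms(1)] by (simp add: is_draw_def)

lemma win45:
  assumes l: "l \<ge> 4" and ec: "ec = EC4 \<or> ec = EC5"
  shows "first_player_wins ec 2 l"
  unfolding first_player_wins_def
proof (rule can_force_win.intros)
  show "allowed ec 2 l init_state 0 2"
    using l by (simp add: allowed_def legal2 init_state_def do_move_def tower2)
  let ?s = "do_move 2 init_state 0 2"
  have s: "?s = ((\<lambda>_. 1)(0:=2), Some 0, False, True)"
    by (simp add: do_move_def init_state_def)
  show "game_ends ec 2 ?s \<or>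
    (\<forall>d' q'. allowed ec 2 l ?s d' q' \<longrightarrow>
        \<not> game_ends ec 2 (do_move 2 ?s d' q') \<and> can_force_win ec 2 l (do_move 2 ?s d' q'))"
  proof (intro disjI2 allI impI conjI)
    fix d' q' assume a: "allowed ec 2 l ?s d' q'"
    then have d: "d' = 1" and q: "q' \<in> {1..l}" "q' \<noteq> 2" "q' \<noteq> 1"
      using s by (auto simp: allowed_def legal2)
    have s2: "do_move 2 ?s d' q' = ((\<lambda>_. 1)(0:=2, 1:=q'), Some 1, True, True)"
      using s d by (simp add: do_move_def)
    show "\<not> game_ends ec 2 (do_move 2 ?s d' q')"
      using ends_tower[of ec 2 "do_move 2 ?s d' q'"] s2 q by (auto simp: tower2)
    show "can_force_win ec 2 l (do_move 2 ?s d' q')"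
    proof -
      have e: "game_ends ec 2 (do_move 2 (do_move 2 ?s d' q') 0 q')"
        using s2 ec by (auto simp: game_ends_def do_move_def tower2)
      have "allowed ec 2 l (do_move 2 ?s d' q') 0 q'"
        using s2 q e by (simp add: allowed_def legal2)
      then show ?thesis using e by (blast intro: can_force_win.intros)
    qed
  qed
qed

lemma one_wins:
  assumes l: "l \<ge> 4" and f: "f \<in> {2..l}"
    and ec: "ec = EC1 f \<or> ec = EC4 \<or> ec = EC5"
  shows "first_player_wins ec 1 l \<and> wins_first_move ec 1 l"
proof -
  have al: "allowed ec 1 l init_state 0 f" and e: "game_ends ec 1 (do_move 1 init_state 0 f)"
    using f ec by (auto simp: allowed_def legal_move_def init_state_def do_move_def
        game_ends_def is_tower_def)
  show ?thesis unfolding first_player_wins_def wins_first_move_def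
    using al e can_force_win.intros[OF al] by blast
qed

theorem mainTheorem5:
  fixes l :: nat
  assumes "l \<ge> 4"
  shows "(\<forall>f\<in>{2..l}. is_draw (EC1 f) 2 l) \<and> is_draw EC2 2 l \<and> is_draw EC3 2 l \<and>
         first_player_wins EC4 2 l \<and> first_player_wins EC5 2 l \<and>
         (\<forall>f\<in>{2..l}. first_player_wins (EC1 f) 1 l \<and> wins_first_move (EC1 f) 1 l) \<and>
         first_player_wins EC4 1 l \<and> wins_first_move EC4 1 l \<and>
         first_player_wins EC5 1 l \<and> wins_first_move EC5 1 l"
proof -
  have f2: "2 \<in> {2..l}" using assms by simp
  have "\<forall>f\<in>{2..l}. is_draw (EC1 f) 2 l"
  proof
    fix f assume "f \<in> {2..l}"
    show "is_draw (EC1 f) 2 l" by (rule draw[OF assms, of _ f]) (auto simp: game_ends_def)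
  qed
  moreover have "is_draw EC2 2 l"
    by (rule draw[OF assms, of _ 1]) (auto simp: game_ends_def)
  moreover have "is_draw EC3 2 l"
    by (rule draw[OF assms, of _ 1]) (auto simp: game_ends_def)
  moreover have "first_player_wins EC4 2 l" "first_player_wins EC5 2 l"
    using win45[OF assms] by auto
  moreover have "\<forall>f\<in>{2..l}. first_player_wins (EC1 f) 1 l \<and> wins_first_move (EC1 f) 1 l"
    using one_wins[OF assms] by blast
  moreover have "first_player_wins EC4 1 l \<and> wins_first_move EC4 1 l"
    "first_player_wins EC5 1 l \<and> wins_first_move EC5 1 l"
    using one_wins[OF assms f2] by auto
  ultimately show ?thesis by blast
qed

end
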